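(* Let $ABC$ be a triangle with incenter $I$ and circumcenter $O$, and let $H_A, H_B, H_C$ be the orthocenters of the triangles $BIC$, $CIA$, $AIB$ respectively. Let $O_A, O_B, O_C$ be the circumcenters of the triangles $AH_BH_C$, $BH_CH_A$, $CH_AH_B$ respectively. Then the circumcenter of triangle $O_AO_BO_C$ is the reflection of $O$ in $I$. *)

theory Defs
  imports "HOL-Analysis.Analysis"
begin

type_synonym point = "real^2"

definition circumcenter :: "point \<Rightarrow> point \<Rightarrow> point \<Rightarrow> point" where
  "circumcenter A B C = (THE P. dist P A = dist P B \<and> dist P A = dist P C)"

definition orthocenter :: "point \<Rightarrow> point \<Rightarrow> point \<Rightarrow> point" where
  "orthocenter A B C = (THE H. (H - A) \<bullet> (B - C) = 0 \<and> (H - B) \<bullet> (C - A) = 0 \<and> (H - C) \<bullet> (A - B) = 0)"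

definition incenter :: "point \<Rightarrow> point \<Rightarrow> point \<Rightarrow> point" where
  "incenter A B C =
     (1 / (dist B C + dist C A + dist A B)) *\<^sub>R
       (dist B C *\<^sub>R A + dist C A *\<^sub>R B + dist A B *\<^sub>R C)"

end

theory Submission
  imports Defs
begin


definition det2 :: "point \<Rightarrow> point \<Rightarrow> real" where
  "det2 p q = p$1 * q$2 - p$2 * q$1"

lemma inner2: "inner (x::point) y = x$1 * y$1 + x$2 * y$2"
  by (simp add: inner_vec_def sum_2)

lemma collinear0_det: "collinear {0, x::point, y} \<longleftrightarrow> det2 x y = 0"
proof
  assume "collinear {0, x, y}"
  then have "x = 0 \<or> y = 0 \<or> (\<exists>c. y = c *\<^sub>R x)" by (simp add: collinear_lemma)
  then show "det2 x y = 0" by (auto simp: det2_def)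
next
  assume d: "det2 x y = 0"
  show "collinear {0, x, y}"
  proof (cases "x = 0")
    case True then show ?thesis by (simp add: collinear_lemma)
  next
    case False
    then have "x$1 \<noteq> 0 \<or> x$2 \<noteq> 0" by (simp add: vec_eq_iff forall_2)
    then show ?thesis
    proof
      assume h: "x$1 \<noteq> 0"
      have "y = (y$1 / x$1) *\<^sub>R x" using d h
        by (simp add: vec_eq_iff forall_2 det2_def field_simps)
      then show ?thesis by (metis collinear_lemma)
    next
      assume h: "x$2 \<noteq> 0"
      have "y = (y$2 / x$2) *\<^sub>R x" using d h
        by (simp add: vec_eq_iff forall_2 det2_def field_simps)
      then show ?thesis by (metis collinear_lemma)
    qed
  qed
qed

lemma collinear_det: "collinear {X, Y, Z::point} \<longleftrightarrow> det2 (Y - X) (Z - X) = 0"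
proof -
  have e: "{X, Y, Z} = {Y, X, Z}" by auto
  have "collinear {Y, X, Z} \<longleftrightarrow> collinear {0, Y - X, Z - X}"
    by (rule collinear_3) (simp add: NO_MATCH_def)
  then have "collinear {X, Y, Z} \<longleftrightarrow> collinear {0, Y - X, Z - X}"
    by (simp only: e)
  then show ?thesis by (simp add: collinear0_det)
qed

lemma perp_zero:
  assumes "det2 p q \<noteq> 0" "inner w p = 0" "inner w q = 0"
  shows "w = (0::point)"
proof -
  have "w$1 * det2 p q = q$2 * inner w p - p$2 * inner w q"
    "w$2 * det2 p q = p$1 * inner w q - q$1 * inner w p"
    by (simp_all add: inner2 det2_def algebra_simps)
  then have "w$1 * det2 p q = 0" "w$2 * det2 p q = 0" using assms(2,3) by simp_all
  then show ?thesis using assms(1) by (simp add: vec_eq_iff forall_2)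
qed

lemma circ_unique:
  assumes "\<not> collinear {X, Y, Z}"
    "inner (P - X) (P - X) = inner (P - Y) (P - Y)"
    "inner (P - X) (P - X) = inner (P - Z) (P - Z)"
  shows "circumcenter X Y Z = P"
  unfolding circumcenter_def
proof (rule the_equality)
  have e: "dist P X = dist P Y \<longleftrightarrow> inner (P - X) (P - X) = inner (P - Y) (P - Y)" for P X Y :: point
    by (simp add: dist_norm norm_eq_sqrt_inner)
  show "dist P X = dist P Y \<and> dist P X = dist P Z" using assms e by blast
  fix Q assume "dist Q X = dist Q Y \<and> dist Q X = dist Q Z"
  then have q: "inner (Q - X) (Q - X) = inner (Q - Y) (Q - Y)" "inner (Q - X) (Q - X) = inner (Q - Z) (Q - Z)"
    using e by blast+
  have d: "det2 (Y - X) (Z - X) \<noteq> 0" using assms(1) collinear_det by blast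
  have k: "2 * inner (Q - P) (T - X) = (inner (Q - X) (Q - X) - inner (Q - T) (Q - T))
     - (inner (P - X) (P - X) - inner (P - T) (P - T))" for T
    by (simp add: inner2 algebra_simps)
  have "Q - P = 0"
    apply (rule perp_zero[OF d])
    using q assms(2,3) k[of Y] k[of Z] by simp_all
  then show "Q = P" by simp
qed

lemma orth_unique:
  assumes "\<not> collinear {X, Y, Z}"
    "inner (H - X) (Y - Z) = 0" "inner (H - Y) (Z - X) = 0" "inner (H - Z) (X - Y) = 0"
  shows "orthocenter X Y Z = H"
  unfolding orthocenter_def
proof (rule the_equality)
  show "inner (H - X) (Y - Z) = 0 \<and> inner (H - Y) (Z - X) = 0 \<and> inner (H - Z) (X - Y) = 0"
    using assms by blast
  fix Q assume q: "inner (Q - X) (Y - Z) = 0 \<and> inner (Q - Y) (Z - X) = 0 \<and> inner (Q - Z) (X - Y) = 0"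
  have d: "det2 (Y - X) (Z - X) \<noteq> 0" using assms(1) collinear_det by blast
  have k1: "inner (Q - H) (Y - Z) = inner (Q - X) (Y - Z) - inner (H - X) (Y - Z)"
    and k2: "inner (Q - H) (Z - X) = inner (Q - Y) (Z - X) - inner (H - Y) (Z - X)"
    and k3: "inner (Q - H) (X - Y) = inner (Q - Z) (X - Y) - inner (H - Z) (X - Y)"
    by (simp_all add: inner_diff_left inner_diff_right)
  have k4: "inner (Q - H) (Y - X) = - inner (Q - H) (Z - X) - inner (Q - H) (X - Y) + inner (Q - H) (Z - X)"
    by (simp add: inner_diff_right)
  have a1: "inner (Q - H) (Z - X) = 0" "inner (Q - H) (X - Y) = 0"
    using q assms k2 k3 by simp_all
  have a2: "inner (Q - H) (Y - X) = 0"
    using a1 by (metis inner_minus_right minus_diff_eq neg_equal_0_iff_equal)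
  have "Q - H = 0"
    by (rule perp_zero[OF d a2 a1(1)])
  then show "Q = H" by simp
qed

definition rp :: "point \<Rightarrow> point \<Rightarrow> point \<Rightarrow> point \<Rightarrow> real \<Rightarrow> real \<Rightarrow> real \<Rightarrow> point" where
  "rp A u v w x y z = A + x *\<^sub>R u + y *\<^sub>R v + z *\<^sub>R w"

lemma rp_diff: "rp A u v w x1 y1 z1 - rp A u v w x2 y2 z2 = (x1-x2) *\<^sub>R u + (y1-y2) *\<^sub>R v + (z1-z2) *\<^sub>R w"
  by (simp add: rp_def algebra_simps)

lemma ip3: "inner (x1 *\<^sub>R u + y1 *\<^sub>R v + z1 *\<^sub>R w) (x2 *\<^sub>R u + y2 *\<^sub>R v + z2 *\<^sub>R (w::point)) =
   x1*x2*inner u u + y1*y2*inner v v + z1*z2*inner w w + (x1*y2+y1*x2)*inner u v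
   + (x1*z2+z1*x2)*inner u w + (y1*z2+z1*y2)*inner v w"
  by (simp add: inner_add_left inner_add_right inner_commute algebra_simps)
lemma solve2:
  assumes "det2 u v \<noteq> 0"
  shows "\<exists>w::point. inner w u = p \<and> inner w v = q"
proof -
  define D where "D = det2 u v"
  define w :: point where "w = (\<chi> i. if i = 1 then (p * v$2 - q * u$2) / D else (q * u$1 - p * v$1) / D)"
  have D: "D \<noteq> 0" using assms D_def by simp
  have w1: "w$1 = (p * v$2 - q * u$2) / D" and w2: "w$2 = (q * u$1 - p * v$1) / D"
    by (simp_all add: w_def)
  have n1: "(p * v$2 - q * u$2) * u$1 + (q * u$1 - p * v$1) * u$2 = p * D"
   and n2: "(p * v$2 - q * u$2) * v$1 + (q * u$1 - p * v$1) * v$2 = q * D"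
    by (simp_all add: D_def det2_def algebra_simps)
  have "inner w u = ((p * v$2 - q * u$2) * u$1 + (q * u$1 - p * v$1) * u$2) / D"
    "inner w v = ((p * v$2 - q * u$2) * v$1 + (q * u$1 - p * v$1) * v$2) / D"
    by (simp_all add: inner2 w1 w2 add_divide_distrib)
  then have "inner w u = p \<and> inner w v = q" using D n1 n2 by simp
  then show ?thesis by blast
qed

lemma tri_pos:
  fixes a b c :: real
  assumes "a \<ge> 0" "b \<ge> 0" "c \<ge> 0" "(a+b+c)*((b+c-a)*(a-b+c)*(a+b-c)) > 0"
  shows "b+c-a > 0"
proof (rule ccontr)
  assume h: "\<not> b+c-a > 0"
  have q: "a-b+c \<ge> 0" "a+b-c \<ge> 0" using h assms by linarith+
  have "(b+c-a)*(a-b+c)*(a+b-c) \<le> 0"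
    using h q by (metis mult_nonpos_nonneg not_less mult_nonneg_nonneg mult.assoc)
  then have "(a+b+c)*((b+c-a)*(a-b+c)*(a+b-c)) \<le> 0"
    using assms by (simp add: mult_nonneg_nonpos)
  then show False using assms by linarith
qed

lemma rp_det:
  "det2 (rp A u v w x1 y1 0 - rp A u v w x2 y2 0) (rp A u v w x3 y3 0 - rp A u v w x4 y4 0) =
    ((x1-x2)*(y3-y4) - (y1-y2)*(x3-x4)) * det2 u v"
  by (simp add: rp_def det2_def algebra_simps)

lemma circ_unique2:
  assumes "\<not> collinear {X, Y, Z}"
    "2 * inner (P - X) (Y - X) = inner (Y - X) (Y - X)"
    "2 * inner (P - X) (Z - X) = inner (Z - X) (Z - X)"
  shows "circumcenter X Y Z = P"
proof (rule circ_unique[OF assms(1)])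
  have k: "inner (P - T) (P - T) = inner (P - X) (P - X) - 2 * inner (P - X) (T - X) + inner (T - X) (T - X)" for T
    by (simp add: inner2 algebra_simps power2_eq_square)
  show "inner (P - X) (P - X) = inner (P - Y) (P - Y)" using k[of Y] assms(2) by simp
  show "inner (P - X) (P - X) = inner (P - Z) (P - Z)" using k[of Z] assms(3) by simp
qed


theorem proposition5p5:
  fixes A B C :: point
  assumes "\<not> collinear {A, B, C}"
  defines "I \<equiv> incenter A B C"
      and "Oc \<equiv> circumcenter A B C"
  defines "HA \<equiv> orthocenter B I C"
      and "HB \<equiv> orthocenter C I A"
      and "HC \<equiv> orthocenter A I B"
  defines "OA \<equiv> circumcenter A HB HC"
      and "OB \<equiv> circumcenter B HC HA"
      and "OC \<equiv> circumcenter C HA HB"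
  assumes "\<not> collinear {A, HB, HC}"
      and "\<not> collinear {B, HC, HA}"
      and "\<not> collinear {C, HA, HB}"
      and "\<not> collinear {OA, OB, OC}"
  shows "circumcenter OA OB OC = 2 *\<^sub>R I - Oc"
proof -
  define u where "u = B - A"
  define v where "v = C - A"
  define a where "a = dist B C"
  define b where "b = dist C A"
  define c where "c = dist A B"
  have uu: "inner u u = c^2"
    unfolding u_def c_def by (simp add: dist_norm power2_norm_eq_inner[symmetric] norm_minus_commute)
  have vv: "inner v v = b^2"
    unfolding v_def b_def by (simp add: dist_norm power2_norm_eq_inner[symmetric])
  have aa: "inner (u - v) (u - v) = a^2"
    unfolding u_def v_def a_def by (simp add: dist_norm power2_norm_eq_inner[symmetric])
  have "inner (u - v) (u - v) = inner u u - 2 * inner u v + inner v v"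
    by (simp add: inner_diff_left inner_diff_right inner_commute)
  then have uv: "inner u v = (b^2 + c^2 - a^2) / 2" using uu vv aa by simp
  have D: "det2 u v \<noteq> 0" using assms(1) collinear_det u_def v_def by simp
  have heron: "inner u u * inner v v - (inner u v)^2 = (det2 u v)^2"
    by (simp add: inner2 det2_def power2_eq_square algebra_simps)
  have a0: "a \<ge> 0" "b \<ge> 0" "c \<ge> 0" by (simp_all add: a_def b_def c_def)
  have "(a+b+c)*((b+c-a)*(a-b+c)*(a+b-c)) = 4*(inner u u * inner v v - (inner u v)^2)"
    unfolding uu vv uv by (simp add: power2_eq_square field_simps)
  then have hpos: "(a+b+c)*((b+c-a)*(a-b+c)*(a+b-c)) > 0" using heron D by simp
  have p_pos: "b+c-a > 0" using tri_pos[OF a0 hpos] .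
  have "(b+c+a)*((c+a-b)*(b-c+a)*(b+c-a)) > 0" using hpos by (simp add: algebra_simps)
  then have q_pos: "a-b+c > 0" using tri_pos[of b c a] a0 by simp
  have "(c+a+b)*((a+b-c)*(c-a+b)*(c+a-b)) > 0" using hpos by (simp add: algebra_simps)
  then have r_pos: "a+b-c > 0" using tri_pos[of c a b] a0 by simp
  have abc_pos: "a > 0" "b > 0" "c > 0" using p_pos q_pos r_pos by simp_all
  define p where "p = b+c-a"
  define q where "q = a-b+c"
  define r where "r = a+b-c"
  define s where "s = a+b+c"
  have pp: "p > 0" "q > 0" "r > 0" "s > 0" using p_pos q_pos r_pos by (simp_all add: p_def q_def r_def s_def)
  have abc: "a = (q+r)/2" "b = (p+r)/2" "c = (p+q)/2" by (simp_all add: p_def q_def r_def)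
  have a_s: "a = s - b - c" by (simp add: s_def)
  have s_eq: "s = p+q+r" by (simp add: p_def q_def r_def s_def)
  obtain w where wu: "inner w u = c^2/2" and wv: "inner w v = b^2/2" using solve2[OF D] by blast
  have uw: "inner u w = c^2/2" and vw: "inner v w = b^2/2" using wu wv by (simp_all add: inner_commute)
  define R where "R = rp A u v w"
  have hA: "R 0 0 0 = A" and hB: "R 1 0 0 = B" and hC: "R 0 1 0 = C"
    by (simp_all add: R_def rp_def u_def v_def)
  note sc = uu vv uv uw vw
  have "circumcenter (R 0 0 0) (R 1 0 0) (R 0 1 0) = R 0 0 1"
    apply (rule circ_unique)
    using assms(1) hA hB hC apply simp
    apply (unfold R_def rp_diff ip3)
    apply (simp_all add: sc)
    done
  then have hO: "Oc = R 0 0 1" using hA hB hC Oc_def by simp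
  have hI: "I = R (b/s) (c/s) 0"
  proof -
    have e1: "a *\<^sub>R A + b *\<^sub>R B + c *\<^sub>R C = s *\<^sub>R A + b *\<^sub>R u + c *\<^sub>R v"
      unfolding u_def v_def s_def by (simp add: algebra_simps)
    have "(1/s) *\<^sub>R (s *\<^sub>R A + b *\<^sub>R u + c *\<^sub>R v) = A + (b/s) *\<^sub>R u + (c/s) *\<^sub>R v"
      using pp(4) by (simp add: scaleR_add_right)
    moreover have "I = (1/s) *\<^sub>R (a *\<^sub>R A + b *\<^sub>R B + c *\<^sub>R C)"
      unfolding I_def incenter_def a_def b_def c_def s_def by simp
    ultimately show ?thesis using e1 by (simp add: R_def rp_def)
  qed
  have "orthocenter (R 1 0 0) (R (b/s) (c/s) 0) (R 0 1 0) = R (1 - b/p) (1 - c/p) 0"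
    apply (rule orth_unique)
    subgoal unfolding R_def collinear_det rp_det mult_eq_0_iff using D pp(4)
      apply (simp add: field_simps)
      using abc_pos by (simp add: s_def)
    apply (unfold R_def rp_diff ip3)
    apply (simp_all add: sc)
    apply (insert pp)
    apply (simp_all add: field_simps)
    apply (unfold p_def q_def r_def s_def)
    apply algebra+
    done
  then have hHA: "HA = R (1 - b/p) (1 - c/p) 0" using hB hC hI HA_def by simp
  have "orthocenter (R 0 1 0) (R (b/s) (c/s) 0) (R 0 0 0) = R (b/q) (1 - c/q) 0"
    apply (rule orth_unique)
    subgoal unfolding R_def collinear_det rp_det mult_eq_0_iff using D pp(4)
      apply (simp add: field_simps)
      using abc_pos by (simp add: s_def)
    apply (unfold R_def rp_diff ip3)
    apply (simp_all add: sc)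
    apply (insert pp)
    apply (simp_all add: field_simps)
    apply (unfold p_def q_def r_def s_def)
    apply algebra+
    done
  then have hHB: "HB = R (b/q) (1 - c/q) 0" using hA hC hI HB_def by simp
  have "orthocenter (R 0 0 0) (R (b/s) (c/s) 0) (R 1 0 0) = R (1 - b/r) (c/r) 0"
    apply (rule orth_unique)
    subgoal unfolding R_def collinear_det rp_det mult_eq_0_iff using D pp(4)
      apply (simp add: field_simps)
      using abc_pos by (simp add: s_def)
    apply (unfold R_def rp_diff ip3)
    apply (simp_all add: sc)
    apply (insert pp)
    apply (simp_all add: field_simps)
    apply (unfold p_def q_def r_def s_def)
    apply algebra+
    done
  then have hHC: "HC = R (1 - b/r) (c/r) 0" using hA hB hI HC_def by simp
  define xA where "xA = (2*b+2*c-a)/p"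
  define xB where "xB = (2*c+2*a-b)/q"
  define xC where "xC = (2*a+2*b-c)/r"
  have "circumcenter (R 0 0 0) (R (b/q) (1 - c/q) 0) (R (1 - b/r) (c/r) 0) = R (xA*b/s) (xA*c/s) (-2)"
    apply (rule circ_unique2)
    using assms(10) hA hHB hHC apply simp
    apply (unfold R_def rp_diff ip3 xA_def xB_def xC_def)
    apply (simp_all add: sc)
    apply (insert pp)
    apply (simp_all add: field_simps)
    apply (unfold p_def q_def r_def s_def)
    apply algebra+
    done
  then have hOA: "OA = R (xA*b/s) (xA*c/s) (-2)" using hA hHB hHC OA_def by simp
  have "circumcenter (R 1 0 0) (R (1 - b/r) (c/r) 0) (R (1 - b/p) (1 - c/p) 0) = R (3 + xB*(b-s)/s) (xB*c/s) (-2)"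
    apply (rule circ_unique2)
    using assms(11) hB hHC hHA apply simp
    apply (unfold R_def rp_diff ip3 xA_def xB_def xC_def)
    apply (simp_all add: sc)
    apply (insert pp)
    apply (simp_all add: field_simps)
    apply (unfold p_def q_def r_def s_def)
    apply algebra+
    done
  then have hOB: "OB = R (3 + xB*(b-s)/s) (xB*c/s) (-2)" using hB hHC hHA OB_def by simp
  have "circumcenter (R 0 1 0) (R (1 - b/p) (1 - c/p) 0) (R (b/q) (1 - c/q) 0) = R (xC*b/s) (3 + xC*(c-s)/s) (-2)"
    apply (rule circ_unique2)
    using assms(12) hC hHA hHB apply simp
    apply (unfold R_def rp_diff ip3 xA_def xB_def xC_def)
    apply (simp_all add: sc)
    apply (insert pp)
    apply (simp_all add: field_simps)
    apply (unfold p_def q_def r_def s_def)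
    apply algebra+
    done
  then have hOC: "OC = R (xC*b/s) (3 + xC*(c-s)/s) (-2)" using hC hHA hHB OC_def by simp
  have hQ: "2 *\<^sub>R I - Oc = R (2*b/s) (2*c/s) (-1)"
    unfolding hI hO R_def rp_def by (simp add: vec_eq_iff algebra_simps)
  have fA: "inner (R (2*b/s) (2*c/s) (-1) - R (xA*b/s) (xA*c/s) (-2)) (R (2*b/s) (2*c/s) (-1) - R (xA*b/s) (xA*c/s) (-2)) = inner w w - a*b*c/s"
    apply (unfold R_def rp_diff ip3 xA_def xB_def xC_def)
    apply (simp add: sc)
    apply (insert pp)
    apply (simp add: field_simps)
    apply (unfold p_def q_def r_def s_def)
    apply algebra
    done
  have fB: "inner (R (2*b/s) (2*c/s) (-1) - R (3 + xB*(b-s)/s) (xB*c/s) (-2)) (R (2*b/s) (2*c/s) (-1) - R (3 + xB*(b-s)/s) (xB*c/s) (-2)) = inner w w - a*b*c/s"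
    apply (unfold R_def rp_diff ip3 xA_def xB_def xC_def)
    apply (simp add: sc)
    apply (insert pp)
    apply (simp add: field_simps)
    apply (unfold p_def q_def r_def s_def)
    apply algebra
    done
  have fC: "inner (R (2*b/s) (2*c/s) (-1) - R (xC*b/s) (3 + xC*(c-s)/s) (-2)) (R (2*b/s) (2*c/s) (-1) - R (xC*b/s) (3 + xC*(c-s)/s) (-2)) = inner w w - a*b*c/s"
    apply (unfold R_def rp_diff ip3 xA_def xB_def xC_def)
    apply (simp add: sc)
    apply (insert pp)
    apply (simp add: field_simps)
    apply (unfold p_def q_def r_def s_def)
    apply algebra
    done
  have "circumcenter (R (xA*b/s) (xA*c/s) (-2)) (R (3 + xB*(b-s)/s) (xB*c/s) (-2)) (R (xC*b/s) (3 + xC*(c-s)/s) (-2)) = R (2*b/s) (2*c/s) (-1)"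
    apply (rule circ_unique)
    using assms(13) hOA hOB hOC apply simp
    using fA fB fC by simp_all
  then show ?thesis using hOA hOB hOC hQ by simp
qed
end
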